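(* Let $G$ be a closed, connected, self adjoint, noncompact subgroup of $GL(n,\mathbb{R})$ and let $v\in\mathbb{R}^n$ be a nonzero minimal vector such that $G(v)$ is unbounded. Then $0<\lambda_X(v)\le 1$ for every $X\in\widetilde{\mathfrak{P}_v}$ with $|X|=1$.
   Context: $\langle A,B\rangle=\mathrm{trace}(AB^t)$, $|A|^2=\langle A,A\rangle$. $v$ is minimal if $|g(v)|\ge|v|$ for all $g\in G$. $\mathfrak{G}$ is the Lie algebra of $G$, $\mathfrak{K}$ and $\mathfrak{P}$ its skew-symmetric and symmetric elements, $\mathfrak{G}_v=\{X\in\mathfrak{G}:X(v)=0\}$, $\widetilde{\mathfrak{P}_v}=(\mathfrak{K}+\mathfrak{G}_v)^\perp\subset\mathfrak{P}$. For nonzero $X\in\mathfrak{P}$, $\lambda_X(v)$ is the largest eigenvalue of $X$ such that $v$ has a nonzero component in the corresponding eigenspace. *)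

theory Defs
  imports "HOL-Analysis.Analysis"
begin

type_synonym 'n mat = "real^'n^'n"

primrec mat_pow :: "'n::finite mat \<Rightarrow> nat \<Rightarrow> 'n mat" where
  "mat_pow A 0 = mat 1"
| "mat_pow A (Suc k) = A ** mat_pow A k"

text \<open>Matrix exponential (the componentwise exp on vectors is NOT the matrix exponential).\<close>
definition mat_exp :: "'n::finite mat \<Rightarrow> 'n mat" where
  "mat_exp A = (\<Sum>k. (1 / fact k) *\<^sub>R mat_pow A k)"

definition mat_inner :: "'n::finite mat \<Rightarrow> 'n mat \<Rightarrow> real" where
  "mat_inner A B = trace (A ** transpose B)"

definition mat_norm :: "'n::finite mat \<Rightarrow> real" where
  "mat_norm A = sqrt (mat_inner A A)"

definition closed_subgroup_GL :: "'n::finite mat set \<Rightarrow> bool" where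
  "closed_subgroup_GL G \<longleftrightarrow>
     G \<subseteq> {A. invertible A} \<and> mat 1 \<in> G \<and>
     (\<forall>A\<in>G. \<forall>B\<in>G. A ** B \<in> G) \<and> (\<forall>A\<in>G. matrix_inv A \<in> G) \<and>
     closedin (top_of_set {A. invertible A}) G"

definition self_adjoint_set :: "'n::finite mat set \<Rightarrow> bool" where
  "self_adjoint_set G \<longleftrightarrow> (\<forall>A\<in>G. transpose A \<in> G)"

definition minimal_vector :: "'n::finite mat set \<Rightarrow> real^'n \<Rightarrow> bool" where
  "minimal_vector G v \<longleftrightarrow> (\<forall>g\<in>G. norm (g *v v) \<ge> norm v)"

definition lie_alg :: "'n::finite mat set \<Rightarrow> 'n mat set" where
  "lie_alg G = {X. \<forall>t::real. mat_exp (t *\<^sub>R X) \<in> G}"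

definition lie_K :: "'n::finite mat set \<Rightarrow> 'n mat set" where
  "lie_K G = {X \<in> lie_alg G. transpose X = - X}"

definition lie_P :: "'n::finite mat set \<Rightarrow> 'n mat set" where
  "lie_P G = {X \<in> lie_alg G. transpose X = X}"

definition lie_stab :: "'n::finite mat set \<Rightarrow> real^'n \<Rightarrow> 'n mat set" where
  "lie_stab G v = {X \<in> lie_alg G. X *v v = 0}"

definition P_tilde :: "'n::finite mat set \<Rightarrow> real^'n \<Rightarrow> 'n mat set" where
  "P_tilde G v = {X \<in> lie_P G. \<forall>A\<in>lie_K G. \<forall>B\<in>lie_stab G v. mat_inner X (A + B) = 0}"

text \<open>Eigenvalues c of X for which v has a nonzero component in the c-eigenspace
  (for symmetric X the component is the orthogonal projection, which is nonzero iff
  v is not orthogonal to the eigenspace); lambda_X(v) is the largest one.\<close>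
definition relevant_eigenvalues :: "'n::finite mat \<Rightarrow> real^'n \<Rightarrow> real set" where
  "relevant_eigenvalues X v = {c. \<exists>w. X *v w = c *\<^sub>R w \<and> v \<bullet> w \<noteq> 0}"

definition lambda_X :: "'n::finite mat \<Rightarrow> real^'n \<Rightarrow> real" where
  "lambda_X X v = Max (relevant_eigenvalues X v)"

end

theory Submission
  imports Defs
begin


lemma sym_inner:
  fixes X :: "real^'n^'n"
  assumes "transpose X = X"
  shows "(X *v x) \<bullet> y = x \<bullet> (X *v y)"
proof -
  have "(X *v x) \<bullet> y = (x v* transpose X) \<bullet> y" by simp
  also have "\<dots> = x \<bullet> (X *v y)" using assms by (simp add: dot_lmul_matrix)
  finally show ?thesis .
qed

lemma norm_sq_mat:
  fixes A :: "real^'n^'m"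
  shows "norm A ^ 2 = (\<Sum>i\<in>UNIV. \<Sum>j\<in>UNIV. (A$i$j)^2)"
  unfolding power2_norm_eq_inner inner_vec_def by (simp add: power2_eq_square)

lemma norm_sq_vec:
  fixes x :: "real^'n"
  shows "norm x ^ 2 = (\<Sum>j\<in>UNIV. (x$j)^2)"
  unfolding power2_norm_eq_inner inner_vec_def by (simp add: power2_eq_square)

lemma mat_norm_eq: "mat_norm (X::real^'n^'n) = norm X"
proof -
  have "mat_inner X X = (\<Sum>i\<in>UNIV. \<Sum>j\<in>UNIV. (X$i$j)^2)"
    by (simp add: mat_inner_def trace_def matrix_matrix_mult_def transpose_def power2_eq_square)
  then have "mat_inner X X = norm X ^ 2" by (simp add: norm_sq_mat)
  then show ?thesis by (simp add: mat_norm_def)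
qed

lemma norm_mv_le:
  fixes A :: "real^'n^'m"
  shows "norm (A *v x) \<le> norm A * norm x"
proof -
  have row: "(A *v x) $ i = A$i \<bullet> x" for i
    by (simp add: matrix_vector_mult_def inner_vec_def mult.commute)
  have "norm (A *v x) ^ 2 = (\<Sum>i\<in>UNIV. (A$i \<bullet> x)^2)"
    by (simp add: norm_sq_vec row)
  also have "\<dots> \<le> (\<Sum>i\<in>UNIV. (norm (A$i))^2 * norm x ^2)"
  proof (rule sum_mono)
    fix i
    have "\<bar>A$i \<bullet> x\<bar> \<le> norm (A$i) * norm x" by (rule Cauchy_Schwarz_ineq2)
    then have "\<bar>A$i \<bullet> x\<bar>^2 \<le> (norm (A$i) * norm x)^2"
      by (meson abs_ge_zero power_mono)
    then show "(A$i \<bullet> x)^2 \<le> (norm (A$i))^2 * norm x ^2" by (simp add: power_mult_distrib)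
  qed
  also have "\<dots> = norm A ^ 2 * norm x ^ 2"
    by (simp add: sum_distrib_right[symmetric] norm_sq_mat norm_sq_vec)
  finally have "norm (A *v x) ^ 2 \<le> (norm A * norm x)^2" by (simp add: power_mult_distrib)
  then show ?thesis
    by (meson abs_ge_self mult_nonneg_nonneg norm_ge_zero power2_le_imp_le)
qed

lemma norm_transpose_sq:
  fixes A :: "real^'n^'m"
  shows "norm (transpose A) ^ 2 = norm A ^ 2"
proof -
  have "norm (transpose A) ^ 2 = (\<Sum>i\<in>UNIV. \<Sum>j\<in>UNIV. (A$j$i)^2)"
    by (simp add: norm_sq_mat transpose_def)
  also have "\<dots> = (\<Sum>j\<in>UNIV. \<Sum>i\<in>UNIV. (A$j$i)^2)" by (rule sum.swap)
  also have "\<dots> = norm A ^ 2" by (simp add: norm_sq_mat)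
  finally show ?thesis .
qed

lemma norm_mm_le:
  fixes A :: "real^'n^'m" and B :: "real^'k^'n"
  shows "norm (A ** B) \<le> norm A * norm B"
proof -
  have col: "(A ** B) $ i $ j = (A *v (transpose B $ j)) $ i" for i j
    by (simp add: matrix_matrix_mult_def matrix_vector_mult_def transpose_def)
  have "norm (A ** B) ^ 2 = norm (transpose (A ** B)) ^2"
    by (simp add: norm_transpose_sq)
  also have "\<dots> = (\<Sum>j\<in>UNIV. norm (A *v (transpose B $ j)) ^ 2)"
    by (simp add: norm_sq_mat norm_sq_vec transpose_def col)
  also have "\<dots> \<le> (\<Sum>j\<in>UNIV. norm A ^2 * norm (transpose B $ j) ^ 2)"
  proof (rule sum_mono)
    fix j
    show "norm (A *v (transpose B $ j)) ^ 2 \<le> norm A ^2 * norm (transpose B $ j) ^ 2"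
      using norm_mv_le[of A "transpose B $ j"] by (simp add: power_mono power_mult_distrib[symmetric])
  qed
  also have "\<dots> = norm A ^2 * norm (transpose B)^2"
    by (simp add: sum_distrib_left[symmetric] norm_sq_mat norm_sq_vec)
  also have "norm (transpose B)^2 = norm B ^2"
    by (rule norm_transpose_sq)
  finally have "norm (A ** B) ^ 2 \<le> (norm A * norm B)^2" by (simp add: power_mult_distrib)
  then show ?thesis
    by (meson abs_ge_self mult_nonneg_nonneg norm_ge_zero power2_le_imp_le)
qed

lemma norm_mat_pow_le: "norm (mat_pow (X::real^'n^'n) k) \<le> norm (mat 1 :: real^'n^'n) * norm X ^ k"
proof (induction k)
  case 0 then show ?case by simp
next
  case (Suc k)
  have "norm (mat_pow X (Suc k)) \<le> norm X * norm (mat_pow X k)"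
    by (simp add: norm_mm_le)
  also have "\<dots> \<le> norm X * (norm (mat 1 :: real^'n^'n) * norm X ^ k)"
    using Suc by (simp add: mult_left_mono)
  finally show ?case by (simp add: algebra_simps)
qed

lemma summable_mat_exp: "summable (\<lambda>k. (1 / fact k) *\<^sub>R mat_pow (X::real^'n^'n) k)"
proof (rule summable_comparison_test)
  show "summable (\<lambda>k. norm (mat 1 :: real^'n^'n) * (inverse (fact k) * norm X ^ k))"
    by (intro summable_mult summable_exp)
  show "\<exists>N. \<forall>n\<ge>N. norm ((1 / fact n) *\<^sub>R mat_pow X n) \<le> norm (mat 1 :: real^'n^'n) * (inverse (fact n) * norm X ^ n)"
  proof (intro exI allI impI)
    fix n :: nat
    have "norm ((1 / fact n) *\<^sub>R mat_pow X n) = inverse (fact n) * norm (mat_pow X n)"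
      by (simp add: field_simps)
    also have "\<dots> \<le> inverse (fact n) * (norm (mat 1 :: real^'n^'n) * norm X ^ n)"
      by (intro mult_left_mono norm_mat_pow_le) simp
    finally show "norm ((1 / fact n) *\<^sub>R mat_pow X n) \<le> norm (mat 1 :: real^'n^'n) * (inverse (fact n) * norm X ^ n)"
      by (simp add: algebra_simps)
  qed
qed

lemma bl_mv: "bounded_linear (\<lambda>A::real^'n^'m. A *v u)"
proof (rule bounded_linear_intro[where K="norm u"])
  fix A B :: "real^'n^'m" and r :: real
  show "(A + B) *v u = A *v u + B *v u" by (simp add: matrix_vector_mult_add_rdistrib)
  show "(r *\<^sub>R A) *v u = r *\<^sub>R (A *v u)"
    by (simp add: vec_eq_iff matrix_vector_mult_def sum_distrib_left algebra_simps)
  show "norm (A *v u) \<le> norm A * norm u" by (rule norm_mv_le)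
qed

lemma mat_pow_eig:
  assumes "X *v u = c *\<^sub>R u"
  shows "mat_pow (X::real^'n^'n) k *v u = (c ^ k) *\<^sub>R u"
proof (induction k)
  case 0 then show ?case by simp
next
  case (Suc k)
  have "mat_pow X (Suc k) *v u = X *v (mat_pow X k *v u)"
    by (simp add: matrix_vector_mul_assoc)
  also have "\<dots> = (c ^ Suc k) *\<^sub>R u"
    using Suc assms by (simp add: matrix_vector_mult_scaleR)
  finally show ?case .
qed

lemma mat_exp_eig:
  assumes "X *v u = c *\<^sub>R u"
  shows "mat_exp (X::real^'n^'n) *v u = exp c *\<^sub>R u"
proof -
  have "mat_exp X *v u = (\<Sum>k. ((1 / fact k) *\<^sub>R mat_pow X k) *v u)"
    unfolding mat_exp_def by (rule bounded_linear.suminf[OF bl_mv summable_mat_exp])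
  also have "\<dots> = (\<Sum>k. (c ^ k /\<^sub>R fact k) *\<^sub>R u)"
  proof (rule suminf_cong)
    fix k
    have "((1 / fact k) *\<^sub>R mat_pow X k) *v u = (1 / fact k) *\<^sub>R (mat_pow X k *v u)"
      by (simp add: vec_eq_iff matrix_vector_mult_def sum_distrib_left algebra_simps)
    then show "((1 / fact k) *\<^sub>R mat_pow X k) *v u = (c ^ k /\<^sub>R fact k) *\<^sub>R u"
      using mat_pow_eig[OF assms, of k] by (simp add: divide_inverse_commute)
  qed
  also have "\<dots> = exp c *\<^sub>R u"
    unfolding exp_def by (rule suminf_scaleR_left[symmetric]) (rule summable_exp_generic)
  finally show ?thesis .
qed

lemma mat_exp_zero: "mat_exp (0::real^'n^'n) = mat 1"
proof -
  have "(\<lambda>k. (1 / fact k) *\<^sub>R mat_pow (0::real^'n^'n) k) = (\<lambda>k. if k = 0 then mat 1 else 0)"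
  proof
    fix k show "(1 / fact k) *\<^sub>R mat_pow (0::real^'n^'n) k = (if k = 0 then mat 1 else 0)"
      by (cases k) simp_all
  qed
  then show ?thesis unfolding mat_exp_def using sums_single[of 0 "\<lambda>_. mat 1 :: real^'n^'n"]
    by (simp add: sums_iff)
qed



lemma quad_lin_zero:
  fixes a b :: real
  assumes "\<And>t. 2*t*a + t^2*b \<le> 0"
  shows "a = 0"
proof -
  define d where "d = \<bar>b\<bar> + 1"
  have d: "d > 0" by (simp add: d_def)
  have "2*(a/d)*a + (a/d)^2*b \<le> 0" by (rule assms)
  then have "(2*(a/d)*a + (a/d)^2*b) * d^2 \<le> 0" using d
    by (simp add: mult_nonpos_nonneg)
  moreover have "a^2 * (2*d + b) = (2*(a/d)*a + (a/d)^2*b) * d^2" using d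
    by (simp add: field_simps power2_eq_square)
  ultimately have "a^2 * (2*d + b) \<le> 0" by simp
  moreover have "2*d + b > 0" by (cases "b \<ge> 0") (simp_all add: d_def)
  ultimately have "a^2 \<le> 0" by (simp add: mult_le_0_iff)
  then show ?thesis by simp
qed

lemma eig_exists:
  fixes X :: "real^'n^'n"
  assumes sym: "transpose X = X" and S: "subspace S" and inv: "\<forall>x\<in>S. X *v x \<in> S"
    and ne: "\<exists>x\<in>S. x \<noteq> 0"
  shows "\<exists>u\<in>S. u \<noteq> 0 \<and> X *v u = (u \<bullet> (X *v u)) *\<^sub>R u"
proof -
  define q where "q x = x \<bullet> (X *v x)" for x
  define K where "K = S \<inter> sphere 0 1"
  have cK: "compact K" unfolding K_def
    using closed_subspace[OF S] compact_sphere by blast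
  obtain x0 where x0: "x0 \<in> S" "x0 \<noteq> 0" using ne by blast
  have "(1 / norm x0) *\<^sub>R x0 \<in> K" unfolding K_def using x0 S
    by (simp add: subspace_scale)
  then have neK: "K \<noteq> {}" by blast
  have bl: "bounded_linear (\<lambda>x. X *v x)"
    by (simp add: linear_conv_bounded_linear)
  have "continuous_on K q" unfolding q_def
    by (intro continuous_on_inner continuous_on_id linear_continuous_on[OF bl])
  then obtain u where uK: "u \<in> K" and umax: "\<And>y. y \<in> K \<Longrightarrow> q y \<le> q u"
    using continuous_attains_sup[OF cK neK] by blast
  define l where "l = q u"
  have uS: "u \<in> S" and un: "norm u = 1" using uK by (auto simp: K_def)
  have uu: "u \<bullet> u = 1" using un by (simp add: norm_eq_1)
  have bound: "q y \<le> l * (y \<bullet> y)" if yS: "y \<in> S" for y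
  proof (cases "y = 0")
    case True then show ?thesis by (simp add: q_def)
  next
    case False
    define z where "z = (1 / norm y) *\<^sub>R y"
    have "z \<in> K" unfolding K_def z_def using yS S False by (simp add: subspace_scale)
    then have "q z \<le> l" using umax l_def by simp
    moreover have "q z = q y / (norm y)^2"
      by (simp add: q_def z_def matrix_vector_mult_scaleR power2_eq_square)
    ultimately have "q y / (norm y)^2 \<le> l" by simp
    then have "q y \<le> l * (norm y)^2" using False by (simp add: divide_le_eq)
    then show ?thesis by (simp add: power2_norm_eq_inner)
  qed
  have key: "y \<bullet> (X *v u) = 0" if yS: "y \<in> S" and yu: "y \<bullet> u = 0" for y
  proof (rule quad_lin_zero[where b = "q y - l * (y \<bullet> y)"])
    fix t :: real
    have yu': "u \<bullet> y = 0" using yu by (simp add: inner_commute)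
    have "u + t *\<^sub>R y \<in> S" using uS yS S by (simp add: subspace_add subspace_scale)
    then have "q (u + t *\<^sub>R y) \<le> l * ((u + t *\<^sub>R y) \<bullet> (u + t *\<^sub>R y))" by (rule bound)
    moreover have "q (u + t *\<^sub>R y) = l + 2*t*(y \<bullet> (X *v u)) + t^2 * q y"
    proof -
      have s: "u \<bullet> (X *v y) = y \<bullet> (X *v u)"
        using sym_inner[OF sym, of y u] by (simp add: inner_commute)
      have e: "X *v (u + t *\<^sub>R y) = X *v u + t *\<^sub>R (X *v y)"
        by (simp add: matrix_vector_right_distrib matrix_vector_mult_scaleR)
      have "q (u + t *\<^sub>R y) = u \<bullet> (X *v u) + t * (u \<bullet> (X *v y)) + t * (y \<bullet> (X *v u)) + t * (t * (y \<bullet> (X *v y)))"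
        unfolding q_def e by (simp add: inner_add_left inner_add_right distrib_left)
      also have "\<dots> = q u + t * (y \<bullet> (X *v u)) + t * (y \<bullet> (X *v u)) + t * (t * q y)"
        by (simp only: s q_def)
      finally show ?thesis by (simp add: l_def power2_eq_square algebra_simps)
    qed
    moreover have "(u + t *\<^sub>R y) \<bullet> (u + t *\<^sub>R y) = 1 + t^2 * (y \<bullet> y)"
      using uu yu yu' by (simp add: inner_add_left inner_add_right power2_eq_square)
    ultimately have "l + 2*t*(y \<bullet> (X *v u)) + t^2 * q y \<le> l * (1 + t^2 * (y \<bullet> y))"
      by simp
    then show "2*t*(y \<bullet> (X *v u)) + t^2 * (q y - l * (y \<bullet> y)) \<le> 0"
      by (simp add: algebra_simps)
  qed
  define y where "y = X *v u - l *\<^sub>R u"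
  have yS: "y \<in> S" unfolding y_def using inv uS S by (simp add: subspace_diff subspace_scale)
  have cm: "(X *v u) \<bullet> u = u \<bullet> (X *v u)" by (rule inner_commute)
  have yu: "y \<bullet> u = 0" unfolding y_def using uu cm
    by (simp add: inner_diff_left l_def q_def)
  have "y \<bullet> y = y \<bullet> (X *v u) - l * (y \<bullet> u)"
    by (simp add: y_def inner_diff_right)
  also have "\<dots> = 0" using key[OF yS yu] yu by simp
  finally have "y = 0" by simp
  then have "X *v u = l *\<^sub>R u" by (simp add: y_def)
  moreover have "u \<noteq> 0" using un by auto
  ultimately show ?thesis using uS by (auto simp: l_def q_def)
qed



lemma eig_decomp:
  fixes X :: "real^'n^'n"
  assumes sym: "transpose X = X"
  shows "\<exists>C w. finite C \<and> (\<forall>c\<in>C. X *v w c = c *\<^sub>R w c) \<and> x = (\<Sum>c\<in>C. w c)"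
proof -
  define D where "D = {x::real^'n. \<exists>C w. finite C \<and> (\<forall>c\<in>C. X *v w c = c *\<^sub>R w c) \<and> x = (\<Sum>c\<in>C. w c)}"
  define Ev where "Ev = {w::real^'n. \<exists>c. X *v w = c *\<^sub>R w}"
  have subD: "subspace D"
    unfolding subspace_def
  proof (intro conjI ballI allI)
    show "0 \<in> D" unfolding D_def by (intro CollectI exI[of _ "{}"]) simp
  next
    fix x y assume "x \<in> D" "y \<in> D"
    then obtain C1 w1 C2 w2 where 1: "finite C1" "\<forall>c\<in>C1. X *v w1 c = c *\<^sub>R w1 c" "x = (\<Sum>c\<in>C1. w1 c)"
      and 2: "finite C2" "\<forall>c\<in>C2. X *v w2 c = c *\<^sub>R w2 c" "y = (\<Sum>c\<in>C2. w2 c)"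
      unfolding D_def by (auto simp only: mem_Collect_eq)
    define w where "w c = (if c \<in> C1 then w1 c else 0) + (if c \<in> C2 then w2 c else 0)" for c
    have eigw: "\<forall>c\<in>C1 \<union> C2. X *v w c = c *\<^sub>R w c"
      using 1(2) 2(2) by (auto simp: w_def matrix_vector_right_distrib scaleR_add_right)
    have fU: "finite (C1 \<union> C2)" using 1(1) 2(1) by simp
    have i1: "(C1 \<union> C2) \<inter> C1 = C1" "(C1 \<union> C2) \<inter> C2 = C2" by blast+
    have e1: "(\<Sum>c\<in>C1 \<union> C2. if c \<in> C1 then w1 c else 0) = sum w1 C1"
      using sum.inter_restrict[OF fU, of w1 C1] i1 by simp
    have e2: "(\<Sum>c\<in>C1 \<union> C2. if c \<in> C2 then w2 c else 0) = sum w2 C2"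
      using sum.inter_restrict[OF fU, of w2 C2] i1 by simp
    have "x + y = (\<Sum>c\<in>C1 \<union> C2. w c)"
      unfolding w_def sum.distrib e1 e2 1(3) 2(3) ..
    then show "x + y \<in> D" unfolding D_def using fU eigw
      by (intro CollectI exI[of _ "C1 \<union> C2"] exI[of _ w] conjI)
  next
    fix r :: real and x assume "x \<in> D"
    then obtain C1 w1 where 1: "finite C1" "\<forall>c\<in>C1. X *v w1 c = c *\<^sub>R w1 c" "x = (\<Sum>c\<in>C1. w1 c)"
      unfolding D_def by blast
    have "\<forall>c\<in>C1. X *v (r *\<^sub>R w1 c) = c *\<^sub>R (r *\<^sub>R w1 c)"
      using 1(2) by (simp add: matrix_vector_mult_scaleR)
    moreover have "r *\<^sub>R x = (\<Sum>c\<in>C1. r *\<^sub>R w1 c)" by (simp add: 1(3) scaleR_sum_right)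
    ultimately show "r *\<^sub>R x \<in> D" unfolding D_def using 1(1)
      by (intro CollectI exI[of _ C1] exI[of _ "\<lambda>c. r *\<^sub>R w1 c"] conjI)
  qed
  have EvD: "Ev \<subseteq> D"
  proof
    fix w assume "w \<in> Ev"
    then obtain c where "X *v w = c *\<^sub>R w" unfolding Ev_def by blast
    then show "w \<in> D" unfolding D_def
      by (intro CollectI exI[of _ "{c}"] exI[of _ "\<lambda>_. w"]) simp
  qed
  have spanD: "span Ev \<subseteq> D" by (rule span_minimal[OF EvD subD])
  have lin: "linear (\<lambda>x. X *v x)" by simp
  have imEv: "(\<lambda>x. X *v x) ` Ev \<subseteq> Ev"
  proof
    fix z assume "z \<in> (\<lambda>x. X *v x) ` Ev"
    then obtain w c where "z = X *v w" "X *v w = c *\<^sub>R w" unfolding Ev_def by blast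
    then show "z \<in> Ev" unfolding Ev_def
      by (intro CollectI exI[of _ c]) (simp add: matrix_vector_mult_scaleR)
  qed
  have invE: "X *v w \<in> span Ev" if "w \<in> span Ev" for w
  proof -
    have "X *v w \<in> (\<lambda>x. X *v x) ` span Ev" using that by blast
    also have "\<dots> = span ((\<lambda>x. X *v x) ` Ev)" by (rule span_linear_image[OF lin, symmetric])
    also have "\<dots> \<subseteq> span Ev" by (rule span_mono[OF imEv])
    finally show ?thesis .
  qed
  define S where "S = {y. \<forall>x \<in> span Ev. orthogonal x y}"
  have subS: "subspace S" unfolding S_def by (rule subspace_orthogonal_to_vectors)
  have invS: "\<forall>z\<in>S. X *v z \<in> S"
  proof
    fix z assume z: "z \<in> S"
    show "X *v z \<in> S" unfolding S_def mem_Collect_eq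
    proof
      fix w assume w: "w \<in> span Ev"
      have "w \<bullet> (X *v z) = (X *v w) \<bullet> z" using sym_inner[OF sym, of w z] by simp
      also have "\<dots> = 0" using z invE[OF w] unfolding S_def orthogonal_def by blast
      finally show "orthogonal w (X *v z)" by (simp add: orthogonal_def)
    qed
  qed
  have S0: "\<forall>z\<in>S. z = 0"
  proof (rule ccontr)
    assume "\<not> (\<forall>z\<in>S. z = 0)"
    then have "\<exists>z\<in>S. z \<noteq> 0" by blast
    from eig_exists[OF sym subS invS this] obtain u where u: "u \<in> S" "u \<noteq> 0"
      "X *v u = (u \<bullet> (X *v u)) *\<^sub>R u" by blast
    then have "u \<in> Ev" unfolding Ev_def by blast
    then have "u \<in> span Ev" by (rule span_base)
    then have "orthogonal u u" using u(1) unfolding S_def by blast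
    then show False using u(2) by (simp add: orthogonal_def)
  qed
  obtain y z where y: "y \<in> span Ev" and z: "\<And>w. w \<in> span Ev \<Longrightarrow> orthogonal z w" and xyz: "x = y + z"
    using orthogonal_subspace_decomp_exists[of Ev x] by metis
  have "z \<in> S" unfolding S_def using z by (simp add: orthogonal_commute)
  then have "z = 0" using S0 by blast
  then have "x \<in> D" using xyz y spanD by auto
  then show ?thesis unfolding D_def by blast
qed



lemma eig_orth:
  fixes X :: "real^'n^'n"
  assumes sym: "transpose X = X" and a: "X *v a = c *\<^sub>R a" and b: "X *v b = d *\<^sub>R b" and cd: "c \<noteq> d"
  shows "a \<bullet> b = 0"
proof -
  have "c * (a \<bullet> b) = (X *v a) \<bullet> b" using a by simp
  also have "\<dots> = a \<bullet> (X *v b)" by (rule sym_inner[OF sym])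
  also have "\<dots> = d * (a \<bullet> b)" using b by simp
  finally have "(c - d) * (a \<bullet> b) = 0" by (simp add: algebra_simps)
  then show ?thesis using cd by simp
qed

lemma matrix_vector_mult_sum_distrib:
  fixes A :: "real^'n^'m"
  shows "A *v (\<Sum>c\<in>S. f c) = (\<Sum>c\<in>S. A *v f c)"
  using linear_sum[OF matrix_vector_mul_linear[of A], of f S] by simp

theorem proposition7p6:
  fixes G :: "(real^'n^'n) set" and v :: "real^'n"
  assumes "closed_subgroup_GL G"
    and "connected G"
    and "self_adjoint_set G"
    and "\<not> compact G"
    and "v \<noteq> 0"
    and "minimal_vector G v"
    and "\<not> bounded ((\<lambda>g. g *v v) ` G)"
  shows "\<forall>X\<in>P_tilde G v. mat_norm X = 1 \<longrightarrow> 0 < lambda_X X v \<and> lambda_X X v \<le> 1"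
proof (intro ballI impI)
  fix X assume XP: "X \<in> P_tilde G v" and n1: "mat_norm X = 1"
  have XL: "X \<in> lie_alg G" and sym: "transpose X = X"
    and orth: "\<forall>A\<in>lie_K G. \<forall>B\<in>lie_stab G v. mat_inner X (A + B) = 0"
    using XP by (auto simp: P_tilde_def lie_P_def)
  have nX: "norm X = 1" using n1 by (simp add: mat_norm_eq)
  have one: "mat 1 \<in> G" using assms(1) by (simp add: closed_subgroup_GL_def)
  have t0: "transpose (0::real^'n^'n) = 0" by (simp add: transpose_def vec_eq_iff)
  have K0: "0 \<in> lie_K G" using one t0 by (simp add: lie_K_def lie_alg_def mat_exp_zero)
  have Xv: "X *v v \<noteq> 0"
  proof
    assume "X *v v = 0"
    then have "X \<in> lie_stab G v" using XL by (simp add: lie_stab_def)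
    then have "mat_inner X (0 + X) = 0" using orth K0 by blast
    then have "mat_norm X = 0" by (simp add: mat_norm_def)
    then show False using n1 by simp
  qed
  have "\<forall>t::real. mat_exp (t *\<^sub>R X) \<in> G" using XL by (simp add: lie_alg_def)
  then have gG: "mat_exp X \<in> G" by (metis scaleR_one)
  obtain C0 w0 where C0: "finite C0" "\<forall>c\<in>C0. X *v w0 c = c *\<^sub>R w0 c" "v = (\<Sum>c\<in>C0. w0 c)"
    using eig_decomp[OF sym] by blast
  define C where "C = {c\<in>C0. w0 c \<noteq> 0}"
  have fC: "finite C" using C0(1) by (simp add: C_def)
  have eigC: "\<And>c. c \<in> C \<Longrightarrow> X *v w0 c = c *\<^sub>R w0 c" using C0(2) by (simp add: C_def)
  have nzC: "\<And>c. c \<in> C \<Longrightarrow> w0 c \<noteq> 0" by (simp add: C_def)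
  have vC: "v = (\<Sum>c\<in>C. w0 c)" unfolding C0(3) C_def
    by (rule sum.mono_neutral_right[OF C0(1)]) auto
  have orthC: "\<And>c d. c \<in> C \<Longrightarrow> d \<in> C \<Longrightarrow> c \<noteq> d \<Longrightarrow> w0 c \<bullet> w0 d = 0"
    using eig_orth[OF sym] eigC by blast
  have vw: "v \<bullet> w0 d = w0 d \<bullet> w0 d" if d: "d \<in> C" for d
  proof -
    have "v \<bullet> w0 d = (\<Sum>c\<in>C. w0 c \<bullet> w0 d)" unfolding vC by (simp add: inner_sum_left)
    also have "\<dots> = (\<Sum>c\<in>C. if c = d then w0 d \<bullet> w0 d else 0)"
      by (rule sum.cong) (use orthC d in auto)
    also have "\<dots> = w0 d \<bullet> w0 d" using fC d by simp
    finally show ?thesis .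
  qed
  have RC: "relevant_eigenvalues X v = C"
  proof
    show "C \<subseteq> relevant_eigenvalues X v"
    proof
      fix c assume c: "c \<in> C"
      have "v \<bullet> w0 c \<noteq> 0" using vw[OF c] nzC[OF c] by simp
      then show "c \<in> relevant_eigenvalues X v" unfolding relevant_eigenvalues_def
        using eigC[OF c] by blast
    qed
  next
    show "relevant_eigenvalues X v \<subseteq> C"
    proof
      fix d assume "d \<in> relevant_eigenvalues X v"
      then obtain w where w: "X *v w = d *\<^sub>R w" "v \<bullet> w \<noteq> 0"
        unfolding relevant_eigenvalues_def by blast
      show "d \<in> C"
      proof (rule ccontr)
        assume dC: "d \<notin> C"
        have "v \<bullet> w = (\<Sum>c\<in>C. w0 c \<bullet> w)" unfolding vC by (simp add: inner_sum_left)
        also have "\<dots> = 0"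
        proof (rule sum.neutral, intro ballI)
          fix c assume c: "c \<in> C"
          then have "c \<noteq> d" using dC by blast
          then show "w0 c \<bullet> w = 0" using eig_orth[OF sym eigC[OF c] w(1)] by blast
        qed
        finally show False using w(2) by simp
      qed
    qed
  qed
  have Cne: "C \<noteq> {}" using assms(5) vC by auto
  have MaxC: "Max C \<in> C" using Max_in[OF fC Cne] .
  have le1: "\<bar>c\<bar> \<le> 1" if c: "c \<in> C" for c
  proof -
    have "\<bar>c\<bar> * norm (w0 c) = norm (X *v w0 c)" using eigC[OF c] by simp
    also have "\<dots> \<le> norm X * norm (w0 c)" by (rule norm_mv_le)
    finally have "\<bar>c\<bar> * norm (w0 c) \<le> 1 * norm (w0 c)" using nX by simp
    then show ?thesis using nzC[OF c] by (simp add: mult_le_cancel_right)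
  qed
  have upper: "Max C \<le> 1" using le1[OF MaxC] by simp
  have pos: "0 < Max C"
  proof (rule ccontr)
    assume "\<not> 0 < Max C"
    then have allnp: "\<forall>c\<in>C. c \<le> 0" using Max_ge[OF fC] by force
    show False
    proof (cases "\<exists>c\<in>C. c < 0")
      case True
      then obtain c0 where c0: "c0 \<in> C" "c0 < 0" by blast
      have gv: "mat_exp X *v v = (\<Sum>c\<in>C. exp c *\<^sub>R w0 c)"
        unfolding vC by (simp add: matrix_vector_mult_sum_distrib mat_exp_eig[OF eigC])
      have pw: "pairwise (\<lambda>i j. orthogonal (exp i *\<^sub>R w0 i) (exp j *\<^sub>R w0 j)) C"
        using orthC by (auto simp: pairwise_def orthogonal_def)
      have pw1: "pairwise (\<lambda>i j. orthogonal (w0 i) (w0 j)) C"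
        using orthC by (auto simp: pairwise_def orthogonal_def)
      have "norm (mat_exp X *v v) ^ 2 = (\<Sum>c\<in>C. (exp c)^2 * norm (w0 c) ^ 2)"
        unfolding gv norm_sum_Pythagorean[OF fC pw] by (simp add: power_mult_distrib)
      also have "\<dots> < (\<Sum>c\<in>C. norm (w0 c) ^ 2)"
      proof (rule sum_strict_mono_ex1[OF fC])
        show "\<forall>c\<in>C. (exp c)^2 * norm (w0 c) ^ 2 \<le> norm (w0 c) ^ 2"
        proof
          fix c assume c: "c \<in> C"
          have "exp c \<le> 1" using allnp c by simp
          then have "(exp c)^2 \<le> 1" by (simp add: power_le_one)
          then show "(exp c)^2 * norm (w0 c) ^ 2 \<le> norm (w0 c) ^ 2"
            by (simp add: mult_left_le_one_le)
        qed
        have "exp c0 < 1" using c0 by simp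
        then have "(exp c0)^2 < 1" by (simp add: power_less_one_iff)
        then show "\<exists>c\<in>C. (exp c)^2 * norm (w0 c) ^ 2 < norm (w0 c) ^ 2"
          using c0 nzC[OF c0(1)] by (intro bexI[OF _ c0(1)]) simp
      qed
      also have "\<dots> = norm v ^ 2" unfolding vC norm_sum_Pythagorean[OF fC pw1] ..
      finally have "norm (mat_exp X *v v) ^ 2 < norm v ^ 2" .
      then have "norm (mat_exp X *v v) < norm v" by (rule power_less_imp_less_base) simp
      moreover have "norm v \<le> norm (mat_exp X *v v)"
        using assms(6) gG by (simp add: minimal_vector_def)
      ultimately show False by simp
    next
      case False
      then have "\<forall>c\<in>C. c = 0" using allnp by force
      then have z: "\<And>c. c \<in> C \<Longrightarrow> c = 0" by blast
      have "X *v v = (\<Sum>c\<in>C. X *v w0 c)" unfolding vC by (rule matrix_vector_mult_sum_distrib)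
      also have "\<dots> = (\<Sum>c\<in>C. 0)" by (rule sum.cong) (use eigC z in auto)
      finally have "X *v v = 0" by simp
      then show False using Xv by simp
    qed
  qed
  show "0 < lambda_X X v \<and> lambda_X X v \<le> 1"
    unfolding lambda_X_def RC using pos upper by simp
qed


end
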